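(* Let $(X_{1,\infty},f_{1,\infty})$ be a topological nonautonomous dynamical system with an $f_{1,\infty}$-invariant sequence $\mu_{1,\infty}$ of Borel probability measures. If $f_{1,\infty}$ is equicontinuous, then the Misiurewicz class $\mathcal{E}_{\mathrm{M}}$ is an admissible class.
   Context: Topological NDS: compact metric spaces $(X_n,\varrho_n)$ and continuous maps $f_n:X_n\to X_{n+1}$; $f_k^n=f_{k+n-1}\circ\cdots\circ f_k$, $f_k^{-n}$ = preimage under $f_k^n$. Invariance: $f_n\mu_n=\mu_{n+1}$. Equicontinuity: for every $\varepsilon>0$ there is $\delta>0$ with $\varrho_{n+1}(f_n x,f_n y)<\varepsilon$ whenever $\varrho_n(x,y)<\delta$, for all $n$ and $x,y\in X_n$. Admissible class: a nonempty class $\mathcal{E}$ of sequences $\{\mathcal{P}_n\}$ of finite Borel partitions of $X_n$ such that (A) each member has $\#\mathcal{P}_n\le N$ for some $N$ and all $n$; (B) $\mathcal{E}$ is closed under passing to termwise coarser sequences; (C) if $\mathcal{P}_{1,\infty}\in\mathcal{E}$ and $m\ge1$ then $\{\bigvee_{i=0}^{m-1}f_k^{-i}\mathcal{P}_{k+i}\}_{k\ge1}\in\mathcal{E}$. Misiurewicz class $\mathcal{E}_{\mathrm{M}}$: the set of sequences $\{\mathcal{P}_n\}$ of finite Borel partitions $\mathcal{P}_n=\{P_{n,1},\dots,P_{n,k_n}\}$ with $\sup_nk_n<\infty$ such that for every $\varepsilon>0$ there exist $\delta>0$ and compact sets $C_{n,i}\subset P_{n,i}$ with, for all $n$: (a)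 $\mu_n(P_{n,i}\setminus C_{n,i})\le\varepsilon$ for all $i$; (b) $\varrho_n(x,y)\ge\delta$ for all $x\in C_{n,i}$, $y\in C_{n,j}$, $i\neq j$. *)

theory Defs
  imports "HOL-Probability.Probability"
begin

text \<open>A topological NDS: spaces X n (compact subsets of a common metric space
  type, carrying the restricted metric), maps f n : X n -> X (n+1).
  Indices start at 0 instead of 1.\<close>

definition nds :: "(nat \<Rightarrow> 'a::metric_space set) \<Rightarrow> (nat \<Rightarrow> 'a \<Rightarrow> 'a) \<Rightarrow> bool" where
  "nds X f \<longleftrightarrow> (\<forall>n. compact (X n) \<and> continuous_on (X n) (f n) \<and> f n ` X n \<subseteq> X (Suc n))"

fun fiter :: "(nat \<Rightarrow> 'a \<Rightarrow> 'a) \<Rightarrow> nat \<Rightarrow> nat \<Rightarrow> 'a \<Rightarrow> 'a" where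
  "fiter f k 0 = id"
| "fiter f k (Suc i) = f (k + i) \<circ> fiter f k i"

definition invariant_measures ::
  "(nat \<Rightarrow> 'a::metric_space set) \<Rightarrow> (nat \<Rightarrow> 'a \<Rightarrow> 'a) \<Rightarrow> (nat \<Rightarrow> 'a measure) \<Rightarrow> bool" where
  "invariant_measures X f \<mu> \<longleftrightarrow>
     (\<forall>n. prob_space (\<mu> n) \<and> space (\<mu> n) = X n \<and>
          sets (\<mu> n) = sets (restrict_space borel (X n)) \<and>
          distr (\<mu> n) (\<mu> (Suc n)) (f n) = \<mu> (Suc n))"

definition equicontinuous_nds :: "(nat \<Rightarrow> 'a::metric_space set) \<Rightarrow> (nat \<Rightarrow> 'a \<Rightarrow> 'a) \<Rightarrow> bool" where
  "equicontinuous_nds X f \<longleftrightarrow>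
     (\<forall>\<epsilon>>0. \<exists>\<delta>>0. \<forall>n. \<forall>x\<in>X n. \<forall>y\<in>X n. dist x y < \<delta> \<longrightarrow> dist (f n x) (f n y) < \<epsilon>)"

definition borel_partition :: "'a::topological_space set \<Rightarrow> 'a set set \<Rightarrow> bool" where
  "borel_partition S P \<longleftrightarrow> finite P \<and> \<Union>P = S \<and> {} \<notin> P \<and>
     (\<forall>A\<in>P. A \<in> sets (restrict_space borel S)) \<and>
     (\<forall>A\<in>P. \<forall>B\<in>P. A \<noteq> B \<longrightarrow> A \<inter> B = {})"

definition partition_seq :: "(nat \<Rightarrow> 'a::topological_space set) \<Rightarrow> (nat \<Rightarrow> 'a set set) \<Rightarrow> bool" where
  "partition_seq X P \<longleftrightarrow> (\<forall>n. borel_partition (X n) (P n))"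

definition coarser :: "'a set set \<Rightarrow> 'a set set \<Rightarrow> bool" where
  "coarser Q P \<longleftrightarrow> (\<forall>A\<in>P. \<exists>B\<in>Q. A \<subseteq> B)"

definition join :: "'a set set \<Rightarrow> 'a set set \<Rightarrow> 'a set set" where
  "join P Q = {A \<inter> B | A B. A \<in> P \<and> B \<in> Q} - {{}}"

definition preim_part :: "'a set \<Rightarrow> ('a \<Rightarrow> 'a) \<Rightarrow> 'a set set \<Rightarrow> 'a set set" where
  "preim_part S g P = {g -` A \<inter> S | A. A \<in> P} - {{}}"

fun bigjoin :: "(nat \<Rightarrow> 'a set) \<Rightarrow> (nat \<Rightarrow> 'a \<Rightarrow> 'a) \<Rightarrow> (nat \<Rightarrow> 'a set set) \<Rightarrow> nat \<Rightarrow> nat \<Rightarrow> 'a set set" where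
  "bigjoin X f P k 0 = {X k}"
| "bigjoin X f P k (Suc i) = join (bigjoin X f P k i) (preim_part (X k) (fiter f k i) (P (k + i)))"

definition admissible_class ::
  "(nat \<Rightarrow> 'a::metric_space set) \<Rightarrow> (nat \<Rightarrow> 'a \<Rightarrow> 'a) \<Rightarrow> (nat \<Rightarrow> 'a set set) set \<Rightarrow> bool" where
  "admissible_class X f \<E> \<longleftrightarrow>
     \<E> \<noteq> {} \<and> (\<forall>P\<in>\<E>. partition_seq X P) \<and>
     (\<forall>P\<in>\<E>. \<exists>N::nat. \<forall>n. card (P n) \<le> N) \<and>
     (\<forall>P\<in>\<E>. \<forall>Q. partition_seq X Q \<and> (\<forall>n. coarser (Q n) (P n)) \<longrightarrow> Q \<in> \<E>) \<and>
     (\<forall>P\<in>\<E>. \<forall>m\<ge>1. (\<lambda>k. bigjoin X f P k m) \<in> \<E>)"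

definition misiurewicz_class ::
  "(nat \<Rightarrow> 'a::metric_space set) \<Rightarrow> (nat \<Rightarrow> 'a measure) \<Rightarrow> (nat \<Rightarrow> 'a set set) set" where
  "misiurewicz_class X \<mu> = {P. partition_seq X P \<and> (\<exists>N::nat. \<forall>n. card (P n) \<le> N) \<and>
     (\<forall>\<epsilon>>0. \<exists>\<delta>>0. \<exists>C :: nat \<Rightarrow> 'a set \<Rightarrow> 'a set. \<forall>n. \<forall>A\<in>P n.
         C n A \<subseteq> A \<and> compact (C n A) \<and> measure (\<mu> n) (A - C n A) \<le> \<epsilon> \<and>
         (\<forall>B\<in>P n. A \<noteq> B \<longrightarrow> (\<forall>x\<in>C n A. \<forall>y\<in>C n B. dist x y \<ge> \<delta>)))}"

end

theory Submission
  imports Defs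
begin


lemma borel_in_restrict:
  assumes "S \<in> sets borel" "S \<subseteq> X" shows "S \<in> sets (restrict_space borel X)"
proof -
  have "S = X \<inter> S" using assms by auto
  then show ?thesis using assms(1) unfolding sets_restrict_space by blast
qed

lemma fiter_maps:
  assumes "nds X f" "x \<in> X k" shows "fiter f k i x \<in> X (k+i)"
  using assms(2) proof (induction i)
  case 0 then show ?case by simp
next
  case (Suc i) then show ?case using assms(1) unfolding nds_def by auto
qed

lemma fiter_cont:
  assumes "nds X f" shows "continuous_on (X k) (fiter f k i)"
proof (induction i)
  case 0 then show ?case by (simp add: continuous_on_id)
next
  case (Suc i)
  have sub: "fiter f k i ` X k \<subseteq> X (k+i)" using fiter_maps[OF assms] by auto
  have "continuous_on (X (k+i)) (f (k+i))" using assms unfolding nds_def by auto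
  then have "continuous_on (X k) (f (k+i) \<circ> fiter f k i)"
    by (rule continuous_on_compose[OF Suc.IH continuous_on_subset[OF _ sub]])
  then show ?case by simp
qed

lemma fiter_meas:
  assumes "nds X f"
  shows "fiter f k i \<in> measurable (restrict_space borel (X k)) (restrict_space borel (X (k+i)))"
  apply (rule measurable_restrict_space2)
  using fiter_maps[OF assms] apply (auto simp: space_restrict_space)[1]
  by (rule borel_measurable_continuous_on_restrict[OF fiter_cont[OF assms]])

lemma fiter_preim_sets:
  assumes "nds X f" "E \<in> sets (restrict_space borel (X (k+i)))"
  shows "fiter f k i -` E \<inter> X k \<in> sets (restrict_space borel (X k))"
  using measurable_sets[OF fiter_meas[OF assms(1)] assms(2)] by (simp add: space_restrict_space)

lemma fiter_measure:
  assumes "nds X f" "invariant_measures X f \<mu>" "E \<in> sets (restrict_space borel (X (k+i)))"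
  shows "measure (\<mu> k) (fiter f k i -` E \<inter> X k) = measure (\<mu> (k+i)) E"
  using assms(3) proof (induction i arbitrary: E)
  case 0
  have "E \<subseteq> X k" using sets.sets_into_space[OF 0] by (simp add: space_restrict_space)
  then have "id -` E \<inter> X k = E" by auto
  then show ?case by simp
next
  case (Suc i)
  let ?g = "f (k+i)"
  have fm: "?g \<in> measurable (restrict_space borel (X (k+i))) (restrict_space borel (X (Suc (k+i))))"
    using fiter_meas[OF assms(1), of "k+i" 1] by simp
  have Es: "E \<in> sets (restrict_space borel (X (Suc (k+i))))" using Suc.prems by simp
  have pre: "?g -` E \<inter> X (k+i) \<in> sets (restrict_space borel (X (k+i)))"
    using measurable_sets[OF fm Es] by (simp add: space_restrict_space)
  have eq: "fiter f k (Suc i) -` E \<inter> X k = fiter f k i -` (?g -` E \<inter> X (k+i)) \<inter> X k"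
    using fiter_maps[OF assms(1)] by auto
  have inv: "prob_space (\<mu> n) \<and> space (\<mu> n) = X n \<and> sets (\<mu> n) = sets (restrict_space borel (X n)) \<and>
          distr (\<mu> n) (\<mu> (Suc n)) (f n) = \<mu> (Suc n)" for n
    using assms(2) unfolding invariant_measures_def by blast
  have fm2: "?g \<in> measurable (\<mu> (k+i)) (\<mu> (Suc (k+i)))"
    using fm inv[of "k+i"] inv[of "Suc (k+i)"] measurable_cong_sets by blast
  have "measure (\<mu> (Suc (k+i))) E = measure (distr (\<mu> (k+i)) (\<mu> (Suc (k+i))) ?g) E"
    using inv[of "k+i"] by simp
  also have "\<dots> = measure (\<mu> (k+i)) (?g -` E \<inter> X (k+i))"
    using measure_distr[OF fm2] Es inv[of "Suc (k+i)"] inv[of "k+i"] by simp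
  finally have m1: "measure (\<mu> (Suc (k+i))) E = measure (\<mu> (k+i)) (?g -` E \<inter> X (k+i))" .
  have "measure (\<mu> k) (fiter f k (Suc i) -` E \<inter> X k) = measure (\<mu> (k+i)) (?g -` E \<inter> X (k+i))"
    unfolding eq by (rule Suc.IH[OF pre])
  then show ?case using m1 by (simp add: comp_def)
qed

lemma fiter_equi:
  assumes "nds X f" "equicontinuous_nds X f" "e > 0"
  shows "\<exists>d>0. \<forall>k. \<forall>x\<in>X k. \<forall>y\<in>X k. dist x y < d \<longrightarrow> dist (fiter f k i x) (fiter f k i y) < e"
  using assms(3) proof (induction i arbitrary: e)
  case 0 then show ?case by auto
next
  case (Suc i)
  obtain d1 where d1: "d1 > 0" "\<forall>n. \<forall>x\<in>X n. \<forall>y\<in>X n. dist x y < d1 \<longrightarrow> dist (f n x) (f n y) < e"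
    using assms(2) Suc.prems unfolding equicontinuous_nds_def by blast
  obtain d where d: "d > 0" "\<forall>k. \<forall>x\<in>X k. \<forall>y\<in>X k. dist x y < d \<longrightarrow> dist (fiter f k i x) (fiter f k i y) < d1"
    using Suc.IH[OF d1(1)] by blast
  show ?case
  proof (intro exI[of _ d] conjI allI ballI impI)
    fix k x y assume xy: "x \<in> X k" "y \<in> X k" "dist x y < d"
    then have "dist (fiter f k i x) (fiter f k i y) < d1" using d by blast
    then show "dist (fiter f k (Suc i) x) (fiter f k (Suc i) y) < e"
      using d1(2) fiter_maps[OF assms(1) xy(1)] fiter_maps[OF assms(1) xy(2)] by auto
  qed (use d in auto)
qed

lemma fiter_equi_all:
  assumes "nds X f" "equicontinuous_nds X f" "e > 0"
  shows "\<exists>d>0. \<forall>i<m. \<forall>k. \<forall>x\<in>X k. \<forall>y\<in>X k. dist x y < d \<longrightarrow> dist (fiter f k i x) (fiter f k i y) < e"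
proof (induction m)
  case 0 then show ?case by (intro exI[of _ 1]) auto
next
  case (Suc m)
  obtain d1 where d1: "d1 > 0" "\<forall>i<m. \<forall>k. \<forall>x\<in>X k. \<forall>y\<in>X k. dist x y < d1 \<longrightarrow> dist (fiter f k i x) (fiter f k i y) < e"
    using Suc.IH by blast
  obtain d2 where d2: "d2 > 0" "\<forall>k. \<forall>x\<in>X k. \<forall>y\<in>X k. dist x y < d2 \<longrightarrow> dist (fiter f k m x) (fiter f k m y) < e"
    using fiter_equi[OF assms] by blast
  show ?case
    apply (intro exI[of _ "min d1 d2"])
    using d1 d2 by (auto simp: less_Suc_eq)
qed




lemma bp_fin: "borel_partition S P \<Longrightarrow> finite P" unfolding borel_partition_def by blast
lemma bp_un: "borel_partition S P \<Longrightarrow> \<Union>P = S" unfolding borel_partition_def by (elim conjE)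
lemma bp_ne: "borel_partition S P \<Longrightarrow> {} \<notin> P" unfolding borel_partition_def by blast
lemma bp_sets: "borel_partition S P \<Longrightarrow> A \<in> P \<Longrightarrow> A \<in> sets (restrict_space borel S)" unfolding borel_partition_def by blast
lemma bp_disj: "borel_partition S P \<Longrightarrow> A \<in> P \<Longrightarrow> B \<in> P \<Longrightarrow> A \<noteq> B \<Longrightarrow> A \<inter> B = {}" unfolding borel_partition_def by blast

lemma join_partition:
  assumes "borel_partition S P" "borel_partition S Q"
  shows "borel_partition S (Defs.join P Q)"
proof -
  have fin: "finite (Defs.join P Q)"
  proof -
    have fP: "finite P" "finite Q" using assms by (simp_all add: bp_fin)
    have "Defs.join P Q \<subseteq> (\<lambda>(A,B). A \<inter> B) ` (P \<times> Q)" unfolding Defs.join_def by auto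
    moreover have "finite ((\<lambda>(A,B). A \<inter> B) ` (P \<times> Q))" using fP by auto
    ultimately show ?thesis by (rule finite_subset)
  qed
  have un: "\<Union>(Defs.join P Q) = S"
  proof (rule equalityI)
    have "\<Union>P = S" using assms(1) by (rule bp_un)
    then show "\<Union>(Defs.join P Q) \<subseteq> S" unfolding Defs.join_def by blast
    show "S \<subseteq> \<Union>(Defs.join P Q)"
    proof
      fix x assume "x \<in> S"
      have "\<Union>P = S" "\<Union>Q = S" using assms by (simp_all add: bp_un)
      then obtain A B where "A \<in> P" "B \<in> Q" "x \<in> A" "x \<in> B" using \<open>x \<in> S\<close> by blast
      then show "x \<in> \<Union>(Defs.join P Q)" unfolding Defs.join_def by blast
    qed
  qed
  show ?thesis unfolding borel_partition_def
  proof (intro conjI fin un)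
    show "{} \<notin> Defs.join P Q" unfolding Defs.join_def by blast
    show "\<forall>A\<in>Defs.join P Q. A \<in> sets (restrict_space borel S)"
    proof
      fix U assume "U \<in> Defs.join P Q"
      then obtain A B where AB: "U = A \<inter> B" "A \<in> P" "B \<in> Q" unfolding Defs.join_def by blast
      have "A \<in> sets (restrict_space borel S)" "B \<in> sets (restrict_space borel S)"
        using assms AB by (simp_all add: bp_sets)
      then show "U \<in> sets (restrict_space borel S)" using AB by auto
    qed
    show "\<forall>A\<in>Defs.join P Q. \<forall>B\<in>Defs.join P Q. A \<noteq> B \<longrightarrow> A \<inter> B = {}"
    proof (intro ballI impI)
      fix U V assume U: "U \<in> Defs.join P Q" and V: "V \<in> Defs.join P Q" and ne: "U \<noteq> V"
      obtain A B where AB: "U = A \<inter> B" "A \<in> P" "B \<in> Q" using U unfolding Defs.join_def by blast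
      obtain A' B' where AB': "V = A' \<inter> B'" "A' \<in> P" "B' \<in> Q" using V unfolding Defs.join_def by blast
      have dP: "A \<noteq> A' \<Longrightarrow> A \<inter> A' = {}" using bp_disj[OF assms(1)] AB AB' by blast
      have dQ: "B \<noteq> B' \<Longrightarrow> B \<inter> B' = {}" using bp_disj[OF assms(2)] AB AB' by blast
      show "U \<inter> V = {}" using ne dP dQ AB AB' by blast
    qed
  qed
qed

lemma preim_partition:
  assumes "borel_partition T P" "g \<in> measurable (restrict_space borel S) (restrict_space borel T)"
    "g ` S \<subseteq> T"
  shows "borel_partition S (preim_part S g P)"
proof -
  have fin: "finite (preim_part S g P)"
  proof -
    have fP: "finite P" using assms(1) by (rule bp_fin)
    have "preim_part S g P \<subseteq> (\<lambda>A. g -` A \<inter> S) ` P" unfolding preim_part_def by auto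
    then show ?thesis using fP by (rule finite_subset[OF _ finite_imageI])
  qed
  have un: "\<Union>(preim_part S g P) = S"
  proof (rule equalityI)
    show "\<Union>(preim_part S g P) \<subseteq> S" unfolding preim_part_def by blast
    show "S \<subseteq> \<Union>(preim_part S g P)"
    proof
      fix x assume x: "x \<in> S"
      then have "g x \<in> T" using assms(3) by auto
      moreover have "\<Union>P = T" using assms(1) by (rule bp_un)
      ultimately obtain A where "A \<in> P" "g x \<in> A" by blast
      then show "x \<in> \<Union>(preim_part S g P)" using x unfolding preim_part_def by blast
    qed
  qed
  have ms: "g -` A \<inter> S \<in> sets (restrict_space borel S)" if "A \<in> P" for A
  proof -
    have "A \<in> sets (restrict_space borel T)" using bp_sets[OF assms(1) that] .
    from measurable_sets[OF assms(2) this] show ?thesis by (simp add: space_restrict_space)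
  qed
  show ?thesis unfolding borel_partition_def
  proof (intro conjI fin un)
    show "{} \<notin> preim_part S g P" unfolding preim_part_def by blast
    show "\<forall>A\<in>preim_part S g P. A \<in> sets (restrict_space borel S)"
    proof
      fix U assume "U \<in> preim_part S g P"
      then obtain A where "U = g -` A \<inter> S" "A \<in> P" unfolding preim_part_def by blast
      then show "U \<in> sets (restrict_space borel S)" using ms by simp
    qed
    show "\<forall>A\<in>preim_part S g P. \<forall>B\<in>preim_part S g P. A \<noteq> B \<longrightarrow> A \<inter> B = {}"
    proof (intro ballI impI)
      fix U V assume U: "U \<in> preim_part S g P" and V: "V \<in> preim_part S g P" and ne: "U \<noteq> V"
      obtain A where A: "U = g -` A \<inter> S" "A \<in> P" using U unfolding preim_part_def by blast
      obtain B where B: "V = g -` B \<inter> S" "B \<in> P" using V unfolding preim_part_def by blast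
      have "A \<noteq> B" using A B ne by blast
      then have "A \<inter> B = {}" using bp_disj[OF assms(1)] A B by blast
      then show "U \<inter> V = {}" using A B by blast
    qed
  qed
qed

lemma card_join:
  assumes "finite P" "finite Q" shows "card (Defs.join P Q) \<le> card P * card Q"
proof -
  have "Defs.join P Q \<subseteq> (\<lambda>(A,B). A \<inter> B) ` (P \<times> Q)" unfolding Defs.join_def by auto
  then have "card (Defs.join P Q) \<le> card ((\<lambda>(A,B). A \<inter> B) ` (P \<times> Q))"
    using assms by (intro card_mono) auto
  also have "\<dots> \<le> card (P \<times> Q)" by (rule card_image_le) (use assms in auto)
  finally show ?thesis by (simp add: card_cartesian_product)
qed

lemma finite_preim:
  assumes "finite P" shows "finite (preim_part S g P)"
proof -
  have "preim_part S g P \<subseteq> (\<lambda>A. g -` A \<inter> S) ` P" unfolding preim_part_def by auto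
  then show ?thesis using assms finite_subset by blast
qed

lemma card_preim:
  assumes "finite P" shows "card (preim_part S g P) \<le> card P"
proof -
  have "preim_part S g P \<subseteq> (\<lambda>A. g -` A \<inter> S) ` P" unfolding preim_part_def by auto
  then have "card (preim_part S g P) \<le> card ((\<lambda>A. g -` A \<inter> S) ` P)"
    using assms by (intro card_mono) auto
  also have "\<dots> \<le> card P" by (rule card_image_le) (use assms in auto)
  finally show ?thesis .
qed

lemma bigjoin_partition:
  assumes "nds X f" "partition_seq X P" "\<And>n. X n \<noteq> {}"
  shows "borel_partition (X k) (bigjoin X f P k m)"
proof (induction m)
  case 0
  have "X k \<in> sets (restrict_space borel (X k))"
    using assms(1) unfolding nds_def by (intro borel_in_restrict borel_closed compact_imp_closed) auto
  then show ?case using assms(3)[of k] unfolding borel_partition_def by auto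
next
  case (Suc m)
  have "borel_partition (X (k+m)) (P (k+m))" using assms(2) unfolding partition_seq_def by blast
  then have "borel_partition (X k) (preim_part (X k) (fiter f k m) (P (k + m)))"
    by (rule preim_partition[OF _ fiter_meas[OF assms(1)]]) (use fiter_maps[OF assms(1)] in auto)
  then show ?case using join_partition[OF Suc.IH] by simp
qed

lemma bigjoin_card:
  assumes "nds X f" "partition_seq X P" "\<And>n. X n \<noteq> {}" "\<And>n. card (P n) \<le> N"
  shows "card (bigjoin X f P k m) \<le> N ^ m"
proof (induction m)
  case 0 then show ?case by simp
next
  case (Suc m)
  have f1: "finite (bigjoin X f P k m)" using bigjoin_partition[OF assms(1-3)] by (rule bp_fin)
  have f2: "finite (P (k+m))" using assms(2) unfolding partition_seq_def by (blast intro: bp_fin)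
  have "card (bigjoin X f P k (Suc m)) \<le> card (bigjoin X f P k m) * card (preim_part (X k) (fiter f k m) (P (k + m)))"
    using card_join[OF f1 finite_preim[OF f2]] by simp
  also have "\<dots> \<le> N ^ m * N"
    using Suc.IH card_preim[OF f2, of "X k" "fiter f k m"] assms(4)[of "k+m"] by (intro mult_mono) auto
  finally show ?case by (simp add: mult.commute)
qed

lemma bigjoin_itin:
  assumes "partition_seq X P" "D \<in> bigjoin X f P k m" "x \<in> D" "y \<in> X k"
    "\<forall>i<m. \<exists>A\<in>P (k+i). fiter f k i x \<in> A \<and> fiter f k i y \<in> A"
  shows "y \<in> D"
  using assms(2,3,5) proof (induction m arbitrary: D)
  case 0 then show ?case using assms(4) by simp
next
  case (Suc m)
  from Suc.prems(1) obtain D0 B where DB: "D = D0 \<inter> B" "D0 \<in> bigjoin X f P k m"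
    "B \<in> preim_part (X k) (fiter f k m) (P (k + m))"
    by (auto simp: Defs.join_def)
  from DB(3) obtain A where A: "B = fiter f k m -` A \<inter> X k" "A \<in> P (k+m)" unfolding preim_part_def by auto
  have D: "D = D0 \<inter> (fiter f k m -` A \<inter> X k)" "D0 \<in> bigjoin X f P k m" "A \<in> P (k+m)"
    using DB A by auto
  have "y \<in> D0" using Suc.IH[OF D(2)] Suc.prems D by auto
  moreover obtain A' where A': "A' \<in> P (k+m)" "fiter f k m x \<in> A'" "fiter f k m y \<in> A'" using Suc.prems(3) by auto
  moreover have "fiter f k m x \<in> A" using Suc.prems D by auto
  moreover have "borel_partition (X (k+m)) (P (k+m))" using assms(1) unfolding partition_seq_def by blast
  ultimately have "A' = A" using D(3) bp_disj by blast
  then show ?case using D assms(4) A' \<open>y \<in> D0\<close> by blast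
qed

lemma sep_closed:
  fixes G :: "'a::metric_space set"
  assumes "closed G" "G \<subseteq> \<Union>F" "D \<in> F" "\<delta> > 0"
    "\<And>D' x y. D' \<in> F \<Longrightarrow> D' \<noteq> D \<Longrightarrow> x \<in> D \<inter> G \<Longrightarrow> y \<in> D' \<inter> G \<Longrightarrow> dist x y \<ge> \<delta>"
  shows "closed (D \<inter> G)"
  unfolding closed_limpt
proof (intro allI impI)
  fix x assume lp: "x islimpt D \<inter> G"
  then have ap: "\<forall>e>0. \<exists>y\<in>D \<inter> G. dist y x < e" unfolding islimpt_approachable by blast
  have "x islimpt G" using lp islimpt_subset by blast
  then have xG: "x \<in> G" using assms(1) closed_limpt by blast
  then obtain D' where D': "D' \<in> F" "x \<in> D'" using assms(2) by blast
  show "x \<in> D \<inter> G"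
  proof (cases "D' = D")
    case True then show ?thesis using D' xG by auto
  next
    case False
    obtain y where "y \<in> D \<inter> G" "dist y x < \<delta>" using ap assms(4) by blast
    then show ?thesis using assms(5)[OF D'(1) False, of y x] D' xG by auto
  qed
qed

lemma total_bound:
  fixes eps :: real
  assumes "prob_space M" "\<Union>P = space M" "finite P" "\<And>A. A \<in> P \<Longrightarrow> A - C A \<in> sets M"
    "\<And>A. A \<in> P \<Longrightarrow> measure M (A - C A) \<le> eps" "\<And>A. A \<in> P \<Longrightarrow> C A \<subseteq> A"
    "S \<in> sets M" "S \<subseteq> space M - \<Union>(C ` P)"
  shows "measure M S \<le> real (card P) * eps"
proof -
  interpret prob_space M by fact
  have "S \<subseteq> (\<Union>A\<in>P. A - C A)" using assms(2,8) by blast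
  then have "measure M S \<le> measure M (\<Union>A\<in>P. A - C A)"
    using assms(3,4) by (intro finite_measure_mono) auto
  also have "\<dots> \<le> (\<Sum>A\<in>P. measure M (A - C A))"
    using assms(3,4) by (intro finite_measure_subadditive_finite) auto
  also have "\<dots> \<le> real (card P) * eps" using assms(5) by (rule sum_bounded_above)
  finally show ?thesis .
qed




lemma compact_sets:
  fixes K :: "'a::metric_space set"
  assumes "compact K" "K \<subseteq> X" shows "K \<in> sets (restrict_space borel X)"
  by (rule borel_in_restrict[OF borel_closed[OF compact_imp_closed[OF assms(1)]] assms(2)])

lemma closed_sets:
  assumes "closed K" "K \<subseteq> X" shows "K \<in> sets (restrict_space borel X)"
  by (rule borel_in_restrict[OF borel_closed[OF assms(1)] assms(2)])

lemma eps_arith: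
  fixes e :: real
  assumes "c \<le> N" "e > 0"
  shows "real c * (e / (real N + 1)) \<le> e"
proof -
  have "real c * (e / (real N + 1)) \<le> (real N + 1) * (e / (real N + 1))"
    using assms by (intro mult_right_mono) auto
  also have "\<dots> = e" by simp
  finally show ?thesis .
qed

lemma misi_unfold:
  assumes "P \<in> misiurewicz_class X \<mu>"
  shows "partition_seq X P" "\<exists>N::nat. \<forall>n. card (P n) \<le> N"
    "\<forall>\<epsilon>>0. \<exists>\<delta>>0. \<exists>C :: nat \<Rightarrow> 'a::metric_space set \<Rightarrow> 'a set. \<forall>n. \<forall>A\<in>P n.
         C n A \<subseteq> A \<and> compact (C n A) \<and> measure (\<mu> n) (A - C n A) \<le> \<epsilon> \<and>
         (\<forall>B\<in>P n. A \<noteq> B \<longrightarrow> (\<forall>x\<in>C n A. \<forall>y\<in>C n B. dist x y \<ge> \<delta>))"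
  using assms unfolding misiurewicz_class_def by simp_all

lemma misi_intro:
  assumes "partition_seq X P" "\<And>n. card (P n) \<le> N"
    "\<And>\<epsilon>. \<epsilon> > 0 \<Longrightarrow> \<exists>\<delta>>0. \<exists>C :: nat \<Rightarrow> 'a::metric_space set \<Rightarrow> 'a set. \<forall>n. \<forall>A\<in>P n.
         C n A \<subseteq> A \<and> compact (C n A) \<and> measure (\<mu> n) (A - C n A) \<le> \<epsilon> \<and>
         (\<forall>B\<in>P n. A \<noteq> B \<longrightarrow> (\<forall>x\<in>C n A. \<forall>y\<in>C n B. dist x y \<ge> \<delta>))"
  shows "P \<in> misiurewicz_class X \<mu>"
  unfolding misiurewicz_class_def using assms by blast




lemma coarsen_case:
  fixes X :: "nat \<Rightarrow> 'a::metric_space set" and \<mu> :: "nat \<Rightarrow> 'a measure"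
  assumes inv: "\<And>n. prob_space (\<mu> n) \<and> space (\<mu> n) = X n \<and> sets (\<mu> n) = sets (restrict_space borel (X n))"
    and cX: "\<And>n. compact (X n)"
    and P: "P \<in> misiurewicz_class X \<mu>"
    and Qp: "partition_seq X Q" and Qc: "\<forall>n. coarser (Q n) (P n)"
  shows "Q \<in> misiurewicz_class X \<mu>"
proof -
  have Pp: "partition_seq X P" using misi_unfold(1)[OF P] .
  obtain N where PN: "\<And>n. card (P n) \<le> N" using misi_unfold(2)[OF P] by blast
  note Pm = misi_unfold(3)[OF P]
  have Pb: "\<And>n. borel_partition (X n) (P n)" using Pp unfolding partition_seq_def by blast
  have Qb: "\<And>n. borel_partition (X n) (Q n)" using Qp unfolding partition_seq_def by blast
  have cov: "\<exists>B\<in>Q n. A \<subseteq> B" if "A \<in> P n" for n A using Qc that unfolding coarser_def by blast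
  have cardQ: "card (Q n) \<le> N" for n
  proof -
    let ?h = "\<lambda>A. SOME B. B \<in> Q n \<and> A \<subseteq> B"
    have "Q n \<subseteq> ?h ` P n"
    proof
      fix B assume B: "B \<in> Q n"
      have "B \<noteq> {}" using bp_ne[OF Qb[of n]] B by blast
      then obtain b where b: "b \<in> B" by blast
      then have "b \<in> X n" using bp_un[OF Qb[of n]] B by blast
      then obtain A where A: "A \<in> P n" "b \<in> A" using bp_un[OF Pb[of n]] by blast
      then have ex: "\<exists>B. B \<in> Q n \<and> A \<subseteq> B" using cov by blast
      have hA: "?h A \<in> Q n \<and> A \<subseteq> ?h A" using someI_ex[OF ex] .
      then have "b \<in> ?h A" using A by blast
      then have "?h A = B" using bp_disj[OF Qb[of n] _ B] hA b by blast
      then show "B \<in> ?h ` P n" using A by blast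
    qed
    then have "card (Q n) \<le> card (?h ` P n)" using bp_fin[OF Pb[of n]] by (intro card_mono) auto
    also have "\<dots> \<le> card (P n)" by (rule card_image_le[OF bp_fin[OF Pb[of n]]])
    finally show ?thesis using PN[of n] by linarith
  qed
  show ?thesis
  proof (rule misi_intro[OF Qp cardQ])
    fix \<epsilon> :: real assume "\<epsilon> > 0"
    define e' where "e' = \<epsilon> / (real N + 1)"
    have e'pos: "e' > 0" using \<open>\<epsilon> > 0\<close> unfolding e'_def by auto
    obtain \<delta> C where dpos: "\<delta> > 0" and CP: "\<forall>n. \<forall>A\<in>P n.
         C n A \<subseteq> A \<and> compact (C n A) \<and> measure (\<mu> n) (A - C n A) \<le> e' \<and>
         (\<forall>B\<in>P n. A \<noteq> B \<longrightarrow> (\<forall>x\<in>C n A. \<forall>y\<in>C n B. dist x y \<ge> \<delta>))"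
      using Pm[rule_format, OF e'pos] by blast
    define K where "K n = \<Union>(C n ` P n)" for n
    have Csub: "C n A \<subseteq> A" if "A \<in> P n" for n A using CP that by blast
    have Ccomp: "compact (C n A)" if "A \<in> P n" for n A using CP that by blast
    have Cmeas: "measure (\<mu> n) (A - C n A) \<le> e'" if "A \<in> P n" for n A using CP that by blast
    have Csep: "dist x y \<ge> \<delta>" if "A \<in> P n" "B \<in> P n" "A \<noteq> B" "x \<in> C n A" "y \<in> C n B" for n A B x y
      using CP that by blast
    have Kclosed: "closed (K n)" for n
      unfolding K_def by (intro closed_UN bp_fin[OF Pb] ballI compact_imp_closed Ccomp)
    have KX: "K n \<subseteq> X n" for n
      unfolding K_def using Csub bp_un[OF Pb[of n]] by blast
    have sepQ: "dist x y \<ge> \<delta>" if B: "B \<in> Q n" "B' \<in> Q n" "B' \<noteq> B" and x: "x \<in> B \<inter> K n" and y: "y \<in> B' \<inter> K n"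
      for n B B' x y
    proof -
      obtain A1 where A1: "A1 \<in> P n" "x \<in> C n A1" using x unfolding K_def by blast
      obtain A2 where A2: "A2 \<in> P n" "y \<in> C n A2" using y unfolding K_def by blast
      have "A1 \<noteq> A2"
      proof
        assume eq: "A1 = A2"
        obtain B'' where B'': "B'' \<in> Q n" "A1 \<subseteq> B''" using cov[OF A1(1)] by blast
        have "x \<in> B''" "y \<in> B''" using A1 A2 B'' eq Csub by blast+
        then have "B'' = B" "B'' = B'" using bp_disj[OF Qb[of n]] B B'' x y by blast+
        then show False using B by simp
      qed
      then show ?thesis using Csep A1 A2 by blast
    qed
    show "\<exists>\<delta>>0. \<exists>C'. \<forall>n. \<forall>B\<in>Q n. C' n B \<subseteq> B \<and> compact (C' n B) \<and> measure (\<mu> n) (B - C' n B) \<le> \<epsilon> \<and>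
         (\<forall>B'\<in>Q n. B \<noteq> B' \<longrightarrow> (\<forall>x\<in>C' n B. \<forall>y\<in>C' n B'. dist x y \<ge> \<delta>))"
    proof (intro exI[of _ \<delta>] conjI dpos exI[of _ "\<lambda>n B. B \<inter> K n"] allI ballI impI)
      fix n B assume B: "B \<in> Q n"
      show "B \<inter> K n \<subseteq> B" by blast
      have BX: "B \<subseteq> X n" using bp_un[OF Qb[of n]] B by blast
      have "closed (B \<inter> K n)"
      proof (rule sep_closed[OF Kclosed _ B dpos])
        show "K n \<subseteq> \<Union>(Q n)" using KX bp_un[OF Qb[of n]] by blast
        fix D' x y assume "D' \<in> Q n" "D' \<noteq> B" "x \<in> B \<inter> K n" "y \<in> D' \<inter> K n"
        then show "\<delta> \<le> dist x y" using sepQ[OF B, of D' x y] by blast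
      qed
      then have "compact (X n \<inter> (B \<inter> K n))" by (rule compact_Int_closed[OF cX])
      moreover have "X n \<inter> (B \<inter> K n) = B \<inter> K n" using BX by blast
      ultimately show "compact (B \<inter> K n)" by simp
      have Bs: "B \<in> sets (\<mu> n)" using bp_sets[OF Qb[of n] B] inv by simp
      have BKs: "B \<inter> K n \<in> sets (\<mu> n)" using closed_sets[OF \<open>closed (B \<inter> K n)\<close>] BX inv by auto
      have "measure (\<mu> n) (B - B \<inter> K n) \<le> real (card (P n)) * e'"
      proof (rule total_bound[where C = "C n"])
        show "prob_space (\<mu> n)" using inv by simp
        show "\<Union>(P n) = space (\<mu> n)" using inv bp_un[OF Pb[of n]] by simp
        show "finite (P n)" by (rule bp_fin[OF Pb])
        show "A - C n A \<in> sets (\<mu> n)" if "A \<in> P n" for A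
        proof -
          have "A \<in> sets (restrict_space borel (X n))" by (rule bp_sets[OF Pb that])
          moreover have "C n A \<in> sets (restrict_space borel (X n))"
            using compact_sets[OF Ccomp[OF that]] Csub[OF that] bp_un[OF Pb[of n]] that by blast
          ultimately show ?thesis using inv by auto
        qed
        show "measure (\<mu> n) (A - C n A) \<le> e'" if "A \<in> P n" for A using Cmeas that .
        show "C n A \<subseteq> A" if "A \<in> P n" for A using Csub that .
        show "B - B \<inter> K n \<in> sets (\<mu> n)" using Bs BKs by auto
        show "B - B \<inter> K n \<subseteq> space (\<mu> n) - \<Union>(C n ` P n)" using BX inv unfolding K_def by auto
      qed
      also have "\<dots> \<le> \<epsilon>" unfolding e'_def by (rule eps_arith[OF PN \<open>\<epsilon> > 0\<close>])
      finally show "measure (\<mu> n) (B - B \<inter> K n) \<le> \<epsilon>" .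
    next
      fix n B B' x y assume "B \<in> Q n" "B' \<in> Q n" "B \<noteq> B'" "x \<in> B \<inter> K n" "y \<in> B' \<inter> K n"
      then show "dist x y \<ge> \<delta>" using sepQ by metis
    qed
  qed
qed




lemma bigjoin_case:
  fixes X :: "nat \<Rightarrow> 'a::metric_space set" and \<mu> :: "nat \<Rightarrow> 'a measure"
  assumes nds: "nds X f" and invm: "invariant_measures X f \<mu>" and eq: "equicontinuous_nds X f"
    and inv: "\<And>n. prob_space (\<mu> n) \<and> space (\<mu> n) = X n \<and> sets (\<mu> n) = sets (restrict_space borel (X n))"
    and cX: "\<And>n. compact (X n)" and ne: "\<And>n. X n \<noteq> {}"
    and P: "P \<in> misiurewicz_class X \<mu>" and m: "m \<ge> 1"
  shows "(\<lambda>k. bigjoin X f P k m) \<in> misiurewicz_class X \<mu>"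
proof -
  have Pp: "partition_seq X P" using misi_unfold(1)[OF P] .
  obtain N where PN: "\<And>n. card (P n) \<le> N" using misi_unfold(2)[OF P] by blast
  note Pm = misi_unfold(3)[OF P]
  have Pb: "\<And>n. borel_partition (X n) (P n)" using Pp unfolding partition_seq_def by blast
  have Jb: "\<And>k. borel_partition (X k) (bigjoin X f P k m)" by (rule bigjoin_partition[OF nds Pp ne])
  have Jp: "partition_seq X (\<lambda>k. bigjoin X f P k m)" using Jb unfolding partition_seq_def by blast
  have Jc: "\<And>k. card (bigjoin X f P k m) \<le> N ^ m" by (rule bigjoin_card[OF nds Pp ne PN])
  show ?thesis
  proof (rule misi_intro[OF Jp Jc])
    fix \<epsilon> :: real assume epos: "\<epsilon> > 0"
    define e1 where "e1 = \<epsilon> / real m"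
    have e1pos: "e1 > 0" using epos m unfolding e1_def by auto
    define e' where "e' = e1 / (real N + 1)"
    have e'pos: "e' > 0" using e1pos unfolding e'_def by auto
    obtain \<delta> C where dpos: "\<delta> > 0" and CP: "\<forall>n. \<forall>A\<in>P n.
         C n A \<subseteq> A \<and> compact (C n A) \<and> measure (\<mu> n) (A - C n A) \<le> e' \<and>
         (\<forall>B\<in>P n. A \<noteq> B \<longrightarrow> (\<forall>x\<in>C n A. \<forall>y\<in>C n B. dist x y \<ge> \<delta>))"
      using Pm[rule_format, OF e'pos] by blast
    obtain \<delta>' where d'pos: "\<delta>' > 0" and d': "\<forall>i<m. \<forall>k. \<forall>x\<in>X k. \<forall>y\<in>X k. dist x y < \<delta>' \<longrightarrow> dist (fiter f k i x) (fiter f k i y) < \<delta>"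
      using fiter_equi_all[OF nds eq dpos] by blast
    define K where "K n = \<Union>(C n ` P n)" for n
    define G where "G k = X k \<inter> (\<Inter>i\<in>{..<m}. fiter f k i -` K (k+i))" for k
    have Csub: "C n A \<subseteq> A" if "A \<in> P n" for n A using CP that by blast
    have Ccomp: "compact (C n A)" if "A \<in> P n" for n A using CP that by blast
    have Cmeas: "measure (\<mu> n) (A - C n A) \<le> e'" if "A \<in> P n" for n A using CP that by blast
    have Csep: "dist x y \<ge> \<delta>" if "A \<in> P n" "B \<in> P n" "A \<noteq> B" "x \<in> C n A" "y \<in> C n B" for n A B x y
      using CP that by blast
    have Kclosed: "closed (K n)" for n
      unfolding K_def by (intro closed_UN bp_fin[OF Pb] ballI compact_imp_closed Ccomp)
    have KX: "K n \<subseteq> X n" for n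
      unfolding K_def using Csub bp_un[OF Pb[of n]] by blast
    have Ks: "K n \<in> sets (restrict_space borel (X n))" for n by (rule closed_sets[OF Kclosed KX])
    have GX: "G k \<subseteq> X k" for k unfolding G_def by blast
    have Gclosed: "closed (G k)" for k
    proof -
      have "G k = X k \<inter> (\<Inter>i\<in>{..<m}. X k \<inter> fiter f k i -` K (k+i))" unfolding G_def by blast
      moreover have ci: "closed (X k \<inter> fiter f k i -` K (k+i))" for i
        by (rule continuous_closed_preimage[OF fiter_cont[OF nds] compact_imp_closed[OF cX] Kclosed])
      have "closed (\<Inter>i\<in>{..<m}. X k \<inter> fiter f k i -` K (k+i))"
        using ci by (intro closed_INT) blast
      then have "closed (X k \<inter> (\<Inter>i\<in>{..<m}. X k \<inter> fiter f k i -` K (k+i)))"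
        by (rule closed_Int[OF compact_imp_closed[OF cX[of k]]])
      ultimately show ?thesis by simp
    qed
    have sepJ: "dist x y \<ge> \<delta>'" if D: "D \<in> bigjoin X f P k m" "D' \<in> bigjoin X f P k m" "D' \<noteq> D"
      and x: "x \<in> D \<inter> G k" and y: "y \<in> D' \<inter> G k" for k D D' x y
    proof (rule ccontr)
      assume "\<not> dist x y \<ge> \<delta>'"
      then have dxy: "dist x y < \<delta>'" by simp
      have xX: "x \<in> X k" and yX: "y \<in> X k" using x y GX by blast+
      have itin: "\<forall>i<m. \<exists>A\<in>P (k+i). fiter f k i x \<in> A \<and> fiter f k i y \<in> A"
      proof (intro allI impI)
        fix i assume i: "i < m"
        have dd: "dist (fiter f k i x) (fiter f k i y) < \<delta>" using d' i xX yX dxy by blast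
        have "fiter f k i x \<in> K (k+i)" using x i unfolding G_def by blast
        then obtain A1 where A1: "A1 \<in> P (k+i)" "fiter f k i x \<in> C (k+i) A1" unfolding K_def by blast
        have "fiter f k i y \<in> K (k+i)" using y i unfolding G_def by blast
        then obtain A2 where A2: "A2 \<in> P (k+i)" "fiter f k i y \<in> C (k+i) A2" unfolding K_def by blast
        have "A1 = A2" using Csep[OF A1(1) A2(1) _ A1(2) A2(2)] dd by force
        then show "\<exists>A\<in>P (k+i). fiter f k i x \<in> A \<and> fiter f k i y \<in> A"
          using A1 A2 Csub by blast
      qed
      have "y \<in> D" using bigjoin_itin[OF Pp D(1) _ yX itin] x by blast
      then have "y \<in> D \<inter> D'" using y by blast
      moreover have "D \<inter> D' = {}" using bp_disj[OF Jb D(1) D(2)] D(3) by blast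
      ultimately show False by blast
    qed
    show "\<exists>\<delta>>0. \<exists>C'. \<forall>k. \<forall>D\<in>bigjoin X f P k m. C' k D \<subseteq> D \<and> compact (C' k D) \<and> measure (\<mu> k) (D - C' k D) \<le> \<epsilon> \<and>
         (\<forall>D'\<in>bigjoin X f P k m. D \<noteq> D' \<longrightarrow> (\<forall>x\<in>C' k D. \<forall>y\<in>C' k D'. dist x y \<ge> \<delta>))"
    proof (intro exI[of _ \<delta>'] conjI d'pos exI[of _ "\<lambda>k D. D \<inter> G k"] allI ballI impI)
      fix k D assume D: "D \<in> bigjoin X f P k m"
      show "D \<inter> G k \<subseteq> D" by blast
      have DX: "D \<subseteq> X k" using bp_un[OF Jb[of k]] D by blast
      have cl: "closed (D \<inter> G k)"
      proof (rule sep_closed[OF Gclosed _ D d'pos])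
        show "G k \<subseteq> \<Union>(bigjoin X f P k m)" using GX bp_un[OF Jb[of k]] by blast
        fix D' x y assume "D' \<in> bigjoin X f P k m" "D' \<noteq> D" "x \<in> D \<inter> G k" "y \<in> D' \<inter> G k"
        then show "\<delta>' \<le> dist x y" using sepJ[OF D, of D' x y] by blast
      qed
      then have "compact (X k \<inter> (D \<inter> G k))" by (rule compact_Int_closed[OF cX])
      moreover have "X k \<inter> (D \<inter> G k) = D \<inter> G k" using DX by blast
      ultimately show "compact (D \<inter> G k)" by simp
      have Ds: "D \<in> sets (\<mu> k)" using bp_sets[OF Jb[of k] D] inv by simp
      have DGs: "D \<inter> G k \<in> sets (\<mu> k)" using closed_sets[OF cl] DX inv by auto
      define Bad where "Bad i = fiter f k i -` (X (k+i) - K (k+i)) \<inter> X k" for i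
      have Xs: "X n \<in> sets (restrict_space borel (X n))" for n by (rule compact_sets[OF cX subset_refl])
      have Es: "X (k+i) - K (k+i) \<in> sets (restrict_space borel (X (k+i)))" for i
        using Xs Ks by blast
      have Bads: "Bad i \<in> sets (\<mu> k)" for i
        using fiter_preim_sets[OF nds Es[of i]] inv unfolding Bad_def by simp
      have Badm: "measure (\<mu> k) (Bad i) \<le> e1" for i
      proof -
        have "measure (\<mu> k) (Bad i) = measure (\<mu> (k+i)) (X (k+i) - K (k+i))"
          unfolding Bad_def by (rule fiter_measure[OF nds invm Es])
        also have "\<dots> \<le> real (card (P (k+i))) * e'"
        proof (rule total_bound[where C = "C (k+i)"])
          let ?n = "k+i"
          show "prob_space (\<mu> ?n)" using inv by simp
          show "\<Union>(P ?n) = space (\<mu> ?n)" using inv bp_un[OF Pb[of ?n]] by simp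
          show "finite (P ?n)" by (rule bp_fin[OF Pb])
          show "A - C ?n A \<in> sets (\<mu> ?n)" if "A \<in> P ?n" for A
          proof -
            have "A \<in> sets (restrict_space borel (X ?n))" by (rule bp_sets[OF Pb that])
            moreover have "C ?n A \<in> sets (restrict_space borel (X ?n))"
              using compact_sets[OF Ccomp[OF that]] Csub[OF that] bp_un[OF Pb[of ?n]] that by blast
            ultimately show ?thesis using inv by auto
          qed
          show "measure (\<mu> ?n) (A - C ?n A) \<le> e'" if "A \<in> P ?n" for A using Cmeas that .
          show "C ?n A \<subseteq> A" if "A \<in> P ?n" for A using Csub that .
          show "X ?n - K ?n \<in> sets (\<mu> ?n)" using Es[of i] inv by simp
          show "X ?n - K ?n \<subseteq> space (\<mu> ?n) - \<Union>(C ?n ` P ?n)" using inv unfolding K_def by auto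
        qed
        also have "\<dots> \<le> e1" unfolding e'_def by (rule eps_arith[OF PN e1pos])
        finally show ?thesis .
      qed
      interpret pk: prob_space "\<mu> k" using inv by simp
      have sub: "D - D \<inter> G k \<subseteq> (\<Union>i\<in>{..<m}. Bad i)"
      proof
        fix z assume z: "z \<in> D - D \<inter> G k"
        then have zX: "z \<in> X k" using DX by blast
        then obtain i where i: "i < m" "fiter f k i z \<notin> K (k+i)" using z unfolding G_def by blast
        have "fiter f k i z \<in> X (k+i)" by (rule fiter_maps[OF nds zX])
        then show "z \<in> (\<Union>i\<in>{..<m}. Bad i)" using i zX unfolding Bad_def by blast
      qed
      have "measure (\<mu> k) (D - D \<inter> G k) \<le> measure (\<mu> k) (\<Union>i\<in>{..<m}. Bad i)"
        using sub Bads by (intro pk.finite_measure_mono) auto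
      also have "\<dots> \<le> (\<Sum>i\<in>{..<m}. measure (\<mu> k) (Bad i))"
        using Bads by (intro pk.finite_measure_subadditive_finite) auto
      also have "\<dots> \<le> real (card {..<m}) * e1" using Badm by (intro sum_bounded_above)
      also have "\<dots> = \<epsilon>" using m unfolding e1_def by simp
      finally show "measure (\<mu> k) (D - D \<inter> G k) \<le> \<epsilon>" .
    next
      fix k D D' x y assume "D \<in> bigjoin X f P k m" "D' \<in> bigjoin X f P k m" "D \<noteq> D'" "x \<in> D \<inter> G k" "y \<in> D' \<inter> G k"
      then show "dist x y \<ge> \<delta>'" using sepJ by metis
    qed
  qed
qed


theorem mainTheorem7:
  fixes X :: "nat \<Rightarrow> 'a::metric_space set"
    and f :: "nat \<Rightarrow> 'a \<Rightarrow> 'a"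
    and \<mu> :: "nat \<Rightarrow> 'a measure"
  assumes "nds X f"
    and "invariant_measures X f \<mu>"
    and "equicontinuous_nds X f"
  shows "admissible_class X f (misiurewicz_class X \<mu>)"
proof -
  have inv: "\<And>n. prob_space (\<mu> n) \<and> space (\<mu> n) = X n \<and> sets (\<mu> n) = sets (restrict_space borel (X n))"
    using assms(2) unfolding invariant_measures_def by blast
  have cX: "\<And>n. compact (X n)" using assms(1) unfolding nds_def by blast
  have ne: "\<And>n. X n \<noteq> {}" using inv prob_space.not_empty by metis
  have E1: "(\<lambda>n. {X n}) \<in> misiurewicz_class X \<mu>"
  proof (rule misi_intro[where N=1])
    have "borel_partition (X n) {X n}" for n
      unfolding borel_partition_def using ne[of n] compact_sets[OF cX subset_refl, of n] by auto
    then show "partition_seq X (\<lambda>n. {X n})" unfolding partition_seq_def by blast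
    show "card {X n} \<le> 1" for n by simp
  next
    fix \<epsilon> :: real assume "\<epsilon> > 0"
    then show "\<exists>\<delta>>0. \<exists>C :: nat \<Rightarrow> 'a set \<Rightarrow> 'a set. \<forall>n. \<forall>A\<in>{X n}.
         C n A \<subseteq> A \<and> compact (C n A) \<and> measure (\<mu> n) (A - C n A) \<le> \<epsilon> \<and>
         (\<forall>B\<in>{X n}. A \<noteq> B \<longrightarrow> (\<forall>x\<in>C n A. \<forall>y\<in>C n B. dist x y \<ge> \<delta>))"
      by (intro exI[of _ 1] exI[of _ "\<lambda>n A. A"]) (auto simp: cX)
  qed
  have C2: "\<forall>P\<in>misiurewicz_class X \<mu>. partition_seq X P" using misi_unfold(1) by blast
  have C3: "\<forall>P\<in>misiurewicz_class X \<mu>. \<exists>N::nat. \<forall>n. card (P n) \<le> N" using misi_unfold(2) by blast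
  have C4: "\<forall>P\<in>misiurewicz_class X \<mu>. \<forall>Q. partition_seq X Q \<and> (\<forall>n. coarser (Q n) (P n)) \<longrightarrow> Q \<in> misiurewicz_class X \<mu>"
  proof (intro ballI allI impI)
    fix P Q assume "P \<in> misiurewicz_class X \<mu>" "partition_seq X Q \<and> (\<forall>n. coarser (Q n) (P n))"
    then show "Q \<in> misiurewicz_class X \<mu>" using coarsen_case[where X=X and \<mu>=\<mu>, OF inv cX] by blast
  qed
  have C5: "\<forall>P\<in>misiurewicz_class X \<mu>. \<forall>m\<ge>1. (\<lambda>k. bigjoin X f P k m) \<in> misiurewicz_class X \<mu>"
  proof (intro ballI allI impI)
    fix P and m :: nat assume "P \<in> misiurewicz_class X \<mu>" "m \<ge> 1"
    then show "(\<lambda>k. bigjoin X f P k m) \<in> misiurewicz_class X \<mu>"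
      using bigjoin_case[where X=X and \<mu>=\<mu> and f=f, OF assms inv cX ne] by blast
  qed
  have C1: "misiurewicz_class X \<mu> \<noteq> {}" using E1 by blast
  show ?thesis unfolding admissible_class_def by (intro conjI C1 C2 C3 C4 C5)
qed

end
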